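(* Let $B=\bigoplus_{i\in\mathbb{Z}}\mathbb{Z}_2$ and $L_2=B\rtimes\langle t\rangle$ the lamplighter group, equipped with the word metric for the generating set $\{t,at\}$ (whose Cayley graph is the Diestel–Leader graph $DL(2,2)$). Let $\Psi:L_2\to L_2$ be a $(1,0)$-quasi-isometry (i.e. an isometry) that coarsely permutes the left cosets of $\langle t\rangle$, with induced permutation $\psi:B\to B$. Then $\psi$ is parallelogram preserving: for all $a,b,c,d\in B$ with $a+c=b+d$ we have $\psi(a)+\psi(c)=\psi(b)+\psi(d)$.
   Context: Elements of $L_2$ are $((x_i),k)$ with $((x_i),k)((y_i),\ell)=((x_i+y_{i-k}),k+\ell)$, $t=(0,1)$, $at=(e_0,1)$ where $e_0$ has a single $1$ at index $0$. $\Psi$ coarsely permutes the left cosets of $\langle t\rangle$ if there are a permutation $\sigma$ of these cosets and $C'\ge0$ with Hausdorff distance $d_{\mathcal H}(\Psi(g\langle t\rangle),\sigma(g\langle t\rangle))<C'$ for all $g$; identifying the coset $((x_i),k)\langle t\rangle$ with $(x_i)\in B$ gives $\psi$. *)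

theory Defs
  imports "HOL-Library.Extended_Real"
begin

text \<open>The group B = direct sum over Z of Z_2, represented by finite subsets of int
  (the support of a finitely supported 0/1 sequence); addition is symmetric difference.\<close>

definition B :: "int set set" where
  "B = {X. finite X}"

definition badd :: "int set \<Rightarrow> int set \<Rightarrow> int set" where
  "badd X Y = (X - Y) \<union> (Y - X)"

definition bshift :: "int \<Rightarrow> int set \<Rightarrow> int set" where
  "bshift k Y = (\<lambda>j. j + k) ` Y"

type_synonym lamp = "int set \<times> int"

definition L2 :: "lamp set" where
  "L2 = {(X, k). finite X}"

definition lmult :: "lamp \<Rightarrow> lamp \<Rightarrow> lamp" where
  "lmult g h = (badd (fst g) (bshift (snd g) (fst h)), snd g + snd h)"

definition linv :: "lamp \<Rightarrow> lamp" where
  "linv g = (bshift (- snd g) (fst g), - snd g)"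

definition gen_t :: lamp where "gen_t = ({}, 1)"
definition gen_at :: lamp where "gen_at = ({0}, 1)"

definition gens :: "lamp set" where
  "gens = {gen_t, gen_at, linv gen_t, linv gen_at}"

definition cayley_adj :: "lamp \<Rightarrow> lamp \<Rightarrow> bool" where
  "cayley_adj g h \<longleftrightarrow> g \<in> L2 \<and> (\<exists>s\<in>gens. h = lmult g s)"

definition word_dist :: "lamp \<Rightarrow> lamp \<Rightarrow> nat" where
  "word_dist g h = (LEAST n. (cayley_adj ^^ n) g h)"

definition setdist_pt :: "lamp \<Rightarrow> lamp set \<Rightarrow> ereal" where
  "setdist_pt a S = (INF b\<in>S. ereal (real (word_dist a b)))"

definition hausdist_L2 :: "lamp set \<Rightarrow> lamp set \<Rightarrow> ereal" where
  "hausdist_L2 S T = max (SUP a\<in>S. setdist_pt a T) (SUP b\<in>T. setdist_pt b S)"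

text \<open>Left coset ((x_i),k)<t> = {(x, k + n) | n}, identified with x \<in> B.\<close>
definition tcoset :: "int set \<Rightarrow> lamp set" where
  "tcoset X = {(X, n) | n. True}"

end

theory Submission
  imports Defs
begin


definition dD :: "lamp \<Rightarrow> lamp \<Rightarrow> int set" where
  "dD u v = (fst u - fst v) \<union> (fst v - fst u)"

definition sepl :: "lamp \<Rightarrow> lamp \<Rightarrow> int \<Rightarrow> bool" where
  "sepl u v j \<longleftrightarrow> ((snd u \<le> j) \<noteq> (snd v \<le> j))"

definition covl :: "lamp \<Rightarrow> lamp \<Rightarrow> int \<Rightarrow> bool" where
  "covl u v j \<longleftrightarrow> (snd u \<le> j \<or> snd v \<le> j \<or> (\<exists>x\<in>dD u v. x \<le> j)) \<and>
                   (j < snd u \<or> j < snd v \<or> (\<exists>x\<in>dD u v. j \<le> x))"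

definition cc :: "lamp \<Rightarrow> lamp \<Rightarrow> int \<Rightarrow> nat" where
  "cc u v j = (if sepl u v j then 1 else if covl u v j then 2 else 0)"

definition FF :: "lamp \<Rightarrow> lamp \<Rightarrow> nat" where
  "FF u v = sum (cc u v) {j. covl u v j}"

lemma sep_cov: "sepl u v j \<Longrightarrow> covl u v j"
  by (auto simp: sepl_def covl_def)

lemma cc_nz: "cc u v j \<noteq> 0 \<longleftrightarrow> covl u v j"
  using sep_cov by (auto simp: cc_def)

lemma cc_le2: "cc u v j \<le> 2" by (auto simp: cc_def)

lemma cc_ge1: "covl u v j \<Longrightarrow> 1 \<le> cc u v j" by (auto simp: cc_def)

lemma dD_sym: "dD u v = dD v u" by (auto simp: dD_def)
lemma sepl_sym: "sepl u v j = sepl v u j" by (auto simp: sepl_def)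
lemma covl_sym: "covl u v j = covl v u j" by (auto simp: covl_def dD_sym)
lemma cc_sym: "cc u v j = cc v u j" by (simp add: cc_def sepl_sym covl_sym)
lemma FF_sym: "FF u v = FF v u" by (simp add: FF_def cc_sym covl_sym)

lemma finite_dD: "finite (fst u) \<Longrightarrow> finite (fst v) \<Longrightarrow> finite (dD u v)"
  by (simp add: dD_def)

lemma finite_cov:
  assumes "finite (fst u)" "finite (fst v)"
  shows "finite {j. covl u v j}"
proof -
  define S where "S = insert (snd u) (insert (snd v) (dD u v))"
  have fS: "finite S" using finite_dD[OF assms] by (simp add: S_def)
  have "{j. covl u v j} \<subseteq> {Min S..Max S}"
  proof
    fix j assume "j \<in> {j. covl u v j}"
    then have c: "covl u v j" by simp
    have "\<exists>x\<in>S. x \<le> j" using c unfolding covl_def S_def by auto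
    then have "Min S \<le> j" using fS by (meson Min_le order_trans)
    moreover have "\<exists>x\<in>S. j \<le> x" using c unfolding covl_def S_def by (auto intro: less_imp_le)
    then have "j \<le> Max S" using fS by (meson Max_ge order_trans)
    ultimately show "j \<in> {Min S..Max S}" by simp
  qed
  then show ?thesis by (rule finite_subset) simp
qed

lemma FF_sum:
  assumes "finite (fst u)" "finite (fst v)" "finite W" "{j. covl u v j} \<subseteq> W"
  shows "FF u v = sum (cc u v) W"
  unfolding FF_def
  by (rule sum.mono_neutral_left) (use assms in \<open>auto simp: cc_def dest: sep_cov\<close>)

lemma cc_tri: "cc u w j \<le> cc u v j + cc v w j"
proof -
  have dd: "dD u w \<subseteq> dD u v \<union> dD v w" by (auto simp: dD_def)
  show ?thesis
  proof (cases "sepl u w j")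
    case True
    then have "sepl u v j \<or> sepl v w j" by (auto simp: sepl_def)
    then show ?thesis using True by (auto simp: cc_def)
  next
    case ns: False
    show ?thesis
    proof (cases "covl u w j")
      case False then show ?thesis using ns by (simp add: cc_def)
    next
      case cw: True
      show ?thesis
      proof (cases "sepl u v j")
        case True
        then have "sepl v w j" using ns by (auto simp: sepl_def)
        then show ?thesis using True ns by (simp add: cc_def)
      next
        case nuv: False
        then have nvw: "\<not> sepl v w j" using ns by (auto simp: sepl_def)
        have "covl u v j \<or> covl v w j"
        proof (cases "snd u \<le> j")
          case True
          then have h: "snd v \<le> j" "snd w \<le> j" using nuv ns by (auto simp: sepl_def)
          then obtain x where x: "x \<in> dD u w" "j \<le> x" using cw True by (auto simp: covl_def)
          then have "x \<in> dD u v \<or> x \<in> dD v w" using dd by auto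
          then show ?thesis using x True h by (auto simp: covl_def)
        next
          case False
          then have h: "j < snd u" "j < snd v" "j < snd w" using nuv ns by (auto simp: sepl_def)
          then obtain x where x: "x \<in> dD u w" "x \<le> j" using cw by (auto simp: covl_def)
          then have "x \<in> dD u v \<or> x \<in> dD v w" using dd by auto
          then show ?thesis using x h by (auto simp: covl_def)
        qed
        then show ?thesis using ns nuv nvw cw by (auto simp: cc_def)
      qed
    qed
  qed
qed

lemma FF_tri_gen:
  assumes f: "finite (fst u)" "finite (fst v)" "finite (fst w)"
  and ex: "\<exists>j. cc u w j < cc u v j + cc v w j"
  shows "FF u w < FF u v + FF v w"
proof -
  define W where "W = {j. covl u w j} \<union> {j. covl u v j} \<union> {j. covl v w j}"
  have fW: "finite W" using finite_cov f by (simp add: W_def)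
  have e1: "FF u w = sum (cc u w) W" by (rule FF_sum) (use f fW in \<open>auto simp: W_def\<close>)
  have e2: "FF u v = sum (cc u v) W" by (rule FF_sum) (use f fW in \<open>auto simp: W_def\<close>)
  have e3: "FF v w = sum (cc v w) W" by (rule FF_sum) (use f fW in \<open>auto simp: W_def\<close>)
  obtain j where j: "cc u w j < cc u v j + cc v w j" using ex by blast
  then have "cc u v j \<noteq> 0 \<or> cc v w j \<noteq> 0" by arith
  then have "j \<in> W" unfolding W_def by (metis (mono_tags) UnCI cc_nz mem_Collect_eq)
  have "sum (cc u w) W < sum (\<lambda>i. cc u v i + cc v w i) W"
    by (rule sum_strict_mono_ex1) (use fW cc_tri j \<open>j \<in> W\<close> in auto)
  then show ?thesis using e1 e2 e3 by (simp add: sum.distrib)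
qed

lemma FF_tri:
  assumes f: "finite (fst u)" "finite (fst v)" "finite (fst w)"
  shows "FF u w \<le> FF u v + FF v w"
proof -
  define W where "W = {j. covl u w j} \<union> {j. covl u v j} \<union> {j. covl v w j}"
  have fW: "finite W" using finite_cov f by (simp add: W_def)
  have e1: "FF u w = sum (cc u w) W" by (rule FF_sum) (use f fW in \<open>auto simp: W_def\<close>)
  have e2: "FF u v = sum (cc u v) W" by (rule FF_sum) (use f fW in \<open>auto simp: W_def\<close>)
  have e3: "FF v w = sum (cc v w) W" by (rule FF_sum) (use f fW in \<open>auto simp: W_def\<close>)
  have "sum (cc u w) W \<le> sum (\<lambda>i. cc u v i + cc v w i) W"
    by (rule sum_mono) (rule cc_tri)
  then show ?thesis using e1 e2 e3 by (simp add: sum.distrib)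
qed

lemma FF_ge_card:
  assumes f: "finite (fst u)" "finite (fst v)" and W: "finite W" "W \<subseteq> {j. covl u v j}"
  shows "card W \<le> FF u v"
proof -
  have "card W = sum (\<lambda>_. 1::nat) W" by simp
  also have "\<dots> \<le> sum (cc u v) W" by (rule sum_mono) (use W cc_ge1[of u v] in \<open>auto\<close>)
  also have "\<dots> \<le> sum (cc u v) {j. covl u v j}"
    by (rule sum_mono2) (use W finite_cov[OF f] in auto)
  finally show ?thesis by (simp add: FF_def)
qed

lemma FF_ge_cc:
  assumes f: "finite (fst u)" "finite (fst v)"
  shows "cc u v j \<le> FF u v"
proof (cases "covl u v j")
  case True
  then show ?thesis unfolding FF_def
    by (intro member_le_sum) (use finite_cov[OF f] in auto)
next
  case False then have "cc u v j = 0" using sep_cov[of u v j] unfolding cc_def by auto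
  then show ?thesis by simp
qed

lemma FF_le_card:
  assumes f: "finite (fst u)" "finite (fst v)"
  shows "FF u v \<le> 2 * card {j. covl u v j}"
  unfolding FF_def using sum_bounded_above[of "{j. covl u v j}" "cc u v" 2] cc_le2
  by (simp add: mult.commute)



lemma FF_ge_height:
  assumes "finite X" "finite Y"
  shows "nat \<bar>k - l\<bar> \<le> FF (X,k) (Y,l)"
proof -
  have "{min k l..<max k l} \<subseteq> {j. covl (X,k) (Y,l) j}"
    by (auto intro!: sep_cov simp: sepl_def)
  then have "card {min k l..<max k l} \<le> FF (X,k) (Y,l)"
    using FF_ge_card[of "(X,k)" "(Y,l)" "{min k l..<max k l}"] assms by simp
  then show ?thesis by (simp add: max_def min_def split: if_splits)
qed

lemma FF_ge_D:
  assumes "finite X" "finite Y" "x \<in> dD (X,k) (Y,l)"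
  shows "nat \<bar>x - k\<bar> \<le> FF (X,k) (Y,l)"
proof (cases "k \<le> x")
  case True
  have "{k..<x} \<subseteq> {j. covl (X,k) (Y,l) j}"
    using assms(3) unfolding covl_def by force
  then have "card {k..<x} \<le> FF (X,k) (Y,l)"
    using FF_ge_card[of "(X,k)" "(Y,l)" "{k..<x}"] assms by simp
  then show ?thesis using True by simp
next
  case False
  have "{x..<k} \<subseteq> {j. covl (X,k) (Y,l) j}"
    using assms(3) by (auto simp: covl_def)
  then have "card {x..<k} \<le> FF (X,k) (Y,l)"
    using FF_ge_card[of "(X,k)" "(Y,l)" "{x..<k}"] assms by simp
  then show ?thesis using False by simp
qed

lemma FF_le_window:
  assumes "finite X" "finite Y" "lo \<le> k" "k \<le> hi" "lo \<le> l" "l \<le> hi"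
    "\<forall>x\<in>dD (X,k) (Y,l). lo \<le> x \<and> x \<le> hi"
  shows "FF (X,k) (Y,l) \<le> 2 * nat (hi - lo + 1)"
proof -
  have s: "{j. covl (X,k) (Y,l) j} \<subseteq> {lo..hi}"
  proof
    fix j assume "j \<in> {j. covl (X,k) (Y,l) j}"
    then have c: "covl (X,k) (Y,l) j" by simp
    have "lo \<le> j" using c assms(3-7) unfolding covl_def by force
    moreover have "j \<le> hi" using c assms(3-7) unfolding covl_def by force
    ultimately show "j \<in> {lo..hi}" by simp
  qed
  then have "card {j. covl (X,k) (Y,l) j} \<le> card {lo..hi}"
    by (intro card_mono) auto
  then show ?thesis using FF_le_card[of "(X,k)" "(Y,l)"] assms(1,2) by simp
qed

lemma FF_same:
  "FF (X,k) (X,l) = nat \<bar>k - l\<bar>"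
proof -
  have s: "{j. covl (X,k) (X,l) j} = {min k l..<max k l}"
    by (auto simp: covl_def dD_def)
  have "FF (X,k) (X,l) = sum (\<lambda>_. 1) {min k l..<max k l}"
    unfolding FF_def s by (rule sum.cong) (auto simp: cc_def sepl_def)
  then show ?thesis by (simp add: max_def min_def)
qed

lemma cc_step:
  assumes "k \<in> {lev, lev+1}" "k' \<in> {lev, lev+1}" "\<forall>x. x \<noteq> lev \<longrightarrow> (x \<in> X \<longleftrightarrow> x \<in> X')"
    "j \<noteq> lev"
  shows "cc (X,k) v j = cc (X',k') v j"
proof -
  have s: "sepl (X,k) v j = sepl (X',k') v j" using assms by (auto simp: sepl_def)
  have dd: "\<forall>x. x \<noteq> lev \<longrightarrow> (x \<in> dD (X,k) v \<longleftrightarrow> x \<in> dD (X',k') v)"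
    using assms(3) by (auto simp: dD_def)
  have c: "covl (X,k) v j = covl (X',k') v j"
  proof (cases "j < lev")
    case True
    then have a: "(\<exists>x\<in>dD (X,k) v. x \<le> j) = (\<exists>x\<in>dD (X',k') v. x \<le> j)"
      using dd by (metis not_le order.trans order_less_imp_le order_less_irrefl)
    have "j < k" "j < k'" using assms(1,2) True by auto
    then show ?thesis using a by (simp add: covl_def)
  next
    case False
    then have F: "lev < j" using assms(4) by simp
    then have a: "(\<exists>x\<in>dD (X,k) v. j \<le> x) = (\<exists>x\<in>dD (X',k') v. j \<le> x)"
      using dd by (metis not_le order.trans order_less_imp_le order_less_irrefl)
    have "k \<le> j" "k' \<le> j" using assms(1,2) F by auto
    then show ?thesis using a by (simp add: covl_def)
  qed
  show ?thesis using s c by (simp add: cc_def)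
qed

lemma FF_step:
  assumes f: "finite X" "finite X'" "finite (fst v)"
    and a: "k \<in> {lev, lev+1}" "k' \<in> {lev, lev+1}" "\<forall>x. x \<noteq> lev \<longrightarrow> (x \<in> X \<longleftrightarrow> x \<in> X')"
  shows "FF (X,k) v + cc (X',k') v lev = FF (X',k') v + cc (X,k) v lev"
proof -
  define W where "W = insert lev ({j. covl (X,k) v j} \<union> {j. covl (X',k') v j})"
  have fW: "finite W" using finite_cov f by (simp add: W_def)
  have e1: "FF (X,k) v = sum (cc (X,k) v) W" by (rule FF_sum) (use f fW in \<open>auto simp: W_def\<close>)
  have e2: "FF (X',k') v = sum (cc (X',k') v) W" by (rule FF_sum) (use f fW in \<open>auto simp: W_def\<close>)
  have lW: "lev \<in> W" by (simp add: W_def)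
  have r1: "sum (cc (X,k) v) W = cc (X,k) v lev + sum (cc (X,k) v) (W - {lev})"
    using sum.remove[OF fW lW] .
  have r2: "sum (cc (X',k') v) W = cc (X',k') v lev + sum (cc (X',k') v) (W - {lev})"
    using sum.remove[OF fW lW] .
  have "sum (cc (X,k) v) (W - {lev}) = sum (cc (X',k') v) (W - {lev})"
    by (rule sum.cong) (use cc_step[OF a] in auto)
  then show ?thesis using e1 e2 r1 r2 by simp
qed

lemma cc_self: "cc u u j = 0"
  by (auto simp: cc_def sepl_def covl_def dD_def)

lemma FF_nbr:
  assumes f: "finite X" "finite X'"
    and a: "k \<in> {lev, lev+1}" "k' \<in> {lev, lev+1}" "k \<noteq> k'" "\<forall>x. x \<noteq> lev \<longrightarrow> (x \<in> X \<longleftrightarrow> x \<in> X')"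
  shows "FF (X',k') (X,k) = 1"
proof -
  have "FF (X,k) (X,k) + cc (X',k') (X,k) lev = FF (X',k') (X,k) + cc (X,k) (X,k) lev"
    by (rule FF_step) (use f a in auto)
  moreover have "FF (X,k) (X,k) = 0" using FF_same[of X k k] by simp
  moreover have "cc (X',k') (X,k) lev = 1" using a by (auto simp: cc_def sepl_def)
  ultimately show ?thesis by (simp add: cc_self)
qed

lemma bshift_empty[simp]: "bshift k {} = {}" by (simp add: bshift_def)
lemma bshift_single[simp]: "bshift k {x} = {x + k}" by (simp add: bshift_def)
lemma badd_empty[simp]: "badd X {} = X" by (simp add: badd_def)

lemma adj_iff:
  "cayley_adj (X,k) w \<longleftrightarrow> finite X \<and>
     (w = (X, k+1) \<or> w = (badd X {k}, k+1) \<or> w = (X, k - 1) \<or> w = (badd X {k - 1}, k - 1))"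
  by (auto simp: cayley_adj_def gens_def gen_t_def gen_at_def linv_def lmult_def L2_def
      add.commute)

lemma badd_mem: "x \<in> badd X Y \<longleftrightarrow> (x \<in> X) \<noteq> (x \<in> Y)"
  by (auto simp: badd_def)

lemma finite_badd: "finite X \<Longrightarrow> finite Y \<Longrightarrow> finite (badd X Y)"
  by (simp add: badd_def)

lemma adj_FF:
  assumes "cayley_adj u w"
  shows "finite (fst u) \<and> finite (fst w) \<and> FF u w = 1"
proof -
  obtain X k where u: "u = (X,k)" by (cases u)
  have fX: "finite X" using assms u adj_iff by auto
  have "w = (X, k+1) \<or> w = (badd X {k}, k+1) \<or> w = (X, k - 1) \<or> w = (badd X {k - 1}, k - 1)"
    using assms u adj_iff by auto
  then have "finite (fst w) \<and> FF w (X,k) = 1"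
  proof (elim disjE)
    assume w: "w = (X, k+1)"
    have "FF w (X,k) = 1" unfolding w by (rule FF_nbr[where lev=k]) (use fX in auto)
    then show ?thesis using w fX by simp
  next
    assume w: "w = (badd X {k}, k+1)"
    have "FF w (X,k) = 1" unfolding w by (rule FF_nbr[where lev=k]) (use fX finite_badd badd_mem in auto)
    then show ?thesis using w fX finite_badd by simp
  next
    assume w: "w = (X, k - 1)"
    have "FF w (X,k) = 1" unfolding w by (rule FF_nbr[where lev="k - 1"]) (use fX in auto)
    then show ?thesis using w fX by simp
  next
    assume w: "w = (badd X {k - 1}, k - 1)"
    have "FF w (X,k) = 1" unfolding w by (rule FF_nbr[where lev="k - 1"]) (use fX finite_badd badd_mem in auto)
    then show ?thesis using w fX finite_badd by simp
  qed
  then show ?thesis using u fX FF_sym by auto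
qed



lemma FF_self: "FF u u = 0"
  by (simp add: FF_def cc_self)

lemma relpow_FF:
  assumes "(cayley_adj ^^ n) u v" "finite (fst u)"
  shows "finite (fst v) \<and> FF u v \<le> n"
  using assms(1)
proof (induction n arbitrary: v)
  case 0
  then show ?case using assms(2) by (simp add: FF_self)
next
  case (Suc n)
  then obtain w where w: "(cayley_adj ^^ n) u w" "cayley_adj w v" by auto
  then have IH: "finite (fst w) \<and> FF u w \<le> n" using Suc.IH by blast
  have a: "finite (fst v) \<and> FF w v = 1" using adj_FF[OF w(2)] by simp
  have "FF u v \<le> FF u w + FF w v" using FF_tri assms(2) IH a by blast
  then show ?case using IH a by simp
qed

definition fixat :: "int set \<Rightarrow> int set \<Rightarrow> int \<Rightarrow> int set" where
  "fixat X Y j = (if (j \<in> X) = (j \<in> Y) then X else badd X {j})"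

lemma fixat_mem: "x \<in> fixat X Y j \<longleftrightarrow> (if x = j then x \<in> Y else x \<in> X)"
  by (auto simp: fixat_def badd_def)

lemma dD_fix: "dD (fixat X Y j, k') (Y,l) = dD (X,k) (Y,l) - {j}"
  by (auto simp: dD_def fixat_mem split: if_splits)

lemma fixat_finite: "finite X \<Longrightarrow> finite (fixat X Y j)"
  by (simp add: fixat_def finite_badd)

lemma adj_up: "finite X \<Longrightarrow> cayley_adj (X,k) (fixat X Y k, k+1)"
  by (simp add: adj_iff fixat_def)

lemma adj_down: "finite X \<Longrightarrow> cayley_adj (X,k) (fixat X Y (k - 1), k - 1)"
  by (simp add: adj_iff fixat_def)

lemma fixat_agree: "\<forall>x. x \<noteq> j \<longrightarrow> (x \<in> X \<longleftrightarrow> x \<in> fixat X Y j)"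
  by (simp add: fixat_mem)

lemma FF_zero:
  assumes "finite X" "finite Y" "FF (X,k) (Y,l) = 0"
  shows "X = Y \<and> k = l"
proof -
  have "nat \<bar>k - l\<bar> = 0" using FF_ge_height[OF assms(1,2), of k l] assms(3) by simp
  moreover have "dD (X,k) (Y,l) = {}"
  proof (rule ccontr)
    assume "dD (X,k) (Y,l) \<noteq> {}"
    then obtain x where x: "x \<in> dD (X,k) (Y,l)" by auto
    then have "covl (X,k) (Y,l) x" by (auto simp: covl_def)
    then have "1 \<le> cc (X,k) (Y,l) x" by (rule cc_ge1)
    moreover have "cc (X,k) (Y,l) x \<le> FF (X,k) (Y,l)" using FF_ge_cc[of "(X,k)" "(Y,l)" x] assms(1,2) by simp
    ultimately have "1 \<le> FF (X,k) (Y,l)" by simp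
    then show False using assms(3) by simp
  qed
  ultimately show ?thesis by (auto simp: dD_def)
qed

lemma exists_dec:
  assumes fX: "finite X" and fY: "finite Y" and nz: "FF (X,k) (Y,l) \<noteq> 0"
  shows "\<exists>u'. cayley_adj (X,k) u' \<and> finite (fst u') \<and> FF u' (Y,l) + 1 = FF (X,k) (Y,l)"
proof -
  let ?D = "dD (X,k) (Y,l)"
  show ?thesis
  proof (cases "k \<le> l")
    case kl: True
    show ?thesis
    proof (cases "\<exists>x\<in>?D. x < k")
      case True
      define X' where "X' = fixat X Y (k - 1)"
      have st: "FF (X,k) (Y,l) + cc (X',k-1) (Y,l) (k-1) = FF (X',k-1) (Y,l) + cc (X,k) (Y,l) (k-1)"
        by (rule FF_step) (use fX fY fixat_finite fixat_agree in \<open>auto simp: X'_def\<close>)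
      have c1: "cc (X',k-1) (Y,l) (k-1) = 1" using kl by (auto simp: cc_def sepl_def)
      have c2: "cc (X,k) (Y,l) (k-1) = 2" using kl True
        by (auto simp: cc_def sepl_def covl_def)
      show ?thesis
        by (rule exI[of _ "(X',k-1)"]) (use st c1 c2 adj_down fX fixat_finite in \<open>auto simp: X'_def\<close>)
    next
      case False
      define X' where "X' = fixat X Y k"
      have st: "FF (X,k) (Y,l) + cc (X',k+1) (Y,l) k = FF (X',k+1) (Y,l) + cc (X,k) (Y,l) k"
        by (rule FF_step) (use fX fY fixat_finite fixat_agree in \<open>auto simp: X'_def\<close>)
      have dd: "dD (X',k+1) (Y,l) = ?D - {k}" unfolding X'_def by (rule dD_fix)
      have "cc (X',k+1) (Y,l) k + 1 = cc (X,k) (Y,l) k"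
      proof (cases "k = l")
        case True
        have "?D \<noteq> {}"
        proof
          assume "?D = {}"
          then have "X = Y" by (auto simp: dD_def)
          then show False using nz True FF_same[of X k k] by simp
        qed
        then obtain x where x: "x \<in> ?D" by auto
        then have "k \<le> x" using False by auto
        then have c2: "cc (X,k) (Y,l) k = 2" using False True x
          by (auto simp: cc_def sepl_def covl_def)
        have c1: "cc (X',k+1) (Y,l) k = 1" using True by (auto simp: cc_def sepl_def)
        show ?thesis using c1 c2 by simp
      next
        case kl2: False
        have c2: "cc (X,k) (Y,l) k = 1" using kl kl2 by (auto simp: cc_def sepl_def)
        have c1: "cc (X',k+1) (Y,l) k = 0" using kl kl2 False dd
          by (auto simp: cc_def sepl_def covl_def)
        show ?thesis using c1 c2 by simp
      qed
      then show ?thesis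
        by (intro exI[of _ "(X',k+1)"]) (use st adj_up fX fixat_finite in \<open>auto simp: X'_def\<close>)
    qed
  next
    case kl: False
    show ?thesis
    proof (cases "\<exists>x\<in>?D. k \<le> x")
      case True
      define X' where "X' = fixat X Y k"
      have st: "FF (X,k) (Y,l) + cc (X',k+1) (Y,l) k = FF (X',k+1) (Y,l) + cc (X,k) (Y,l) k"
        by (rule FF_step) (use fX fY fixat_finite fixat_agree in \<open>auto simp: X'_def\<close>)
      have c1: "cc (X',k+1) (Y,l) k = 1" using kl by (auto simp: cc_def sepl_def)
      have c2: "cc (X,k) (Y,l) k = 2" using kl True
        by (auto simp: cc_def sepl_def covl_def)
      show ?thesis
        by (rule exI[of _ "(X',k+1)"]) (use st c1 c2 adj_up fX fixat_finite in \<open>auto simp: X'_def\<close>)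
    next
      case False
      define X' where "X' = fixat X Y (k - 1)"
      have st: "FF (X,k) (Y,l) + cc (X',k-1) (Y,l) (k-1) = FF (X',k-1) (Y,l) + cc (X,k) (Y,l) (k-1)"
        by (rule FF_step) (use fX fY fixat_finite fixat_agree in \<open>auto simp: X'_def\<close>)
      have dd: "dD (X',k-1) (Y,l) = ?D - {k-1}" unfolding X'_def by (rule dD_fix)
      have c2: "cc (X,k) (Y,l) (k-1) = 1" using kl by (auto simp: cc_def sepl_def)
      have c1: "cc (X',k-1) (Y,l) (k-1) = 0" using kl False dd
        by (auto simp: cc_def sepl_def covl_def)
      show ?thesis
        by (rule exI[of _ "(X',k-1)"]) (use st c1 c2 adj_down fX fixat_finite in \<open>auto simp: X'_def\<close>)
    qed
  qed
qed

lemma FF_path: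
  assumes "finite (fst u)" "finite (fst v)"
  shows "(cayley_adj ^^ FF u v) u v"
proof -
  have "\<And>u. finite (fst u) \<Longrightarrow> FF u v = n \<Longrightarrow> (cayley_adj ^^ n) u v" for n
  proof (induction n)
    case 0
    obtain X k where u: "u = (X,k)" by (cases u)
    obtain Y l where v: "v = (Y,l)" by (cases v)
    show ?case using FF_zero[of X Y k l] 0 assms(2) u v by simp
  next
    case (Suc n)
    obtain X k where u: "u = (X,k)" by (cases u)
    obtain Y l where v: "v = (Y,l)" by (cases v)
    obtain u' where u': "cayley_adj u u'" "finite (fst u')" "FF u' v + 1 = FF u v"
      using exists_dec[of X Y k l] Suc.prems assms(2) u v by auto
    then have "(cayley_adj ^^ n) u' v" using Suc.IH Suc.prems by simp
    then show ?case using relpowp_Suc_I2[of cayley_adj u u' n v] u'(1) by blast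
  qed
  then show ?thesis using assms by blast
qed

lemma word_dist_FF:
  assumes "finite (fst u)" "finite (fst v)"
  shows "word_dist u v = FF u v"
  unfolding word_dist_def
proof (rule Least_equality)
  show "(cayley_adj ^^ FF u v) u v" by (rule FF_path[OF assms])
next
  fix m assume "(cayley_adj ^^ m) u v"
  then show "FF u v \<le> m" using relpow_FF assms by blast
qed



lemma dD_badd: "dD (Z1,k) (Z2,l) = badd Z1 Z2"
  by (simp add: dD_def badd_def)

lemma FF_eq1:
  assumes f: "finite Z1" "finite Z2" and e: "FF (Z1,k) (Z2,l) = 1" and ne: "Z1 \<noteq> Z2"
  shows "\<bar>k - l\<bar> = 1 \<and> badd Z1 Z2 = {min k l}"
proof -
  have h: "nat \<bar>k - l\<bar> \<le> 1" using FF_ge_height[OF f, of k l] e by simp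
  obtain x where x: "x \<in> badd Z1 Z2" using ne by (auto simp: badd_def)
  have kl: "k \<noteq> l"
  proof
    assume "k = l"
    then have "cc (Z1,k) (Z2,l) x = 2" using x by (auto simp: cc_def sepl_def covl_def dD_badd)
    then show False using FF_ge_cc[of "(Z1,k)" "(Z2,l)" x] f e by simp
  qed
  then have k1: "\<bar>k - l\<bar> = 1" using h by simp
  have sub: "badd Z1 Z2 \<subseteq> {min k l}"
  proof
    fix y assume y: "y \<in> badd Z1 Z2"
    show "y \<in> {min k l}"
    proof (rule ccontr)
      assume "y \<notin> {min k l}"
      then have c2: "card {y, min k l} = 2" by simp
      have "{y, min k l} \<subseteq> {j. covl (Z1,k) (Z2,l) j}"
        using y kl by (auto simp: covl_def dD_badd min_def)
      then have "card {y, min k l} \<le> FF (Z1,k) (Z2,l)"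
        using FF_ge_card[of "(Z1,k)" "(Z2,l)" "{y, min k l}"] f by simp
      then show False using c2 e by simp
    qed
  qed
  then show ?thesis using k1 x by auto
qed

lemma near_loc:
  assumes "finite Z" "finite Y" "FF (Z,h) (Y,q) \<le> K" "x \<in> badd Z Y"
  shows "\<bar>x - h\<bar> \<le> int K"
  using FF_ge_D[of Z Y x h q] assms by (simp add: dD_badd)

lemma nl: "nat (N::int) \<le> 2 * nat M \<Longrightarrow> 0 < N \<Longrightarrow> N \<le> 2*M" by linarith
lemma nl2: "nat \<bar>x::int\<bar> \<le> nat N \<Longrightarrow> 0 < N \<Longrightarrow> \<bar>x\<bar> \<le> N" by linarith
lemma arith_sep: fixes a b h j0 :: int and K :: nat
  assumes "8 * int K + 10 \<le> 2 * (\<bar>a - h\<bar> + 2 * int K + 1)"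
   "8 * int K + 10 \<le> 2 * (\<bar>h - b\<bar> + 2 * int K + 1)"
   "2*(8 * int K + 10) \<le> 2 * (\<bar>a - b\<bar> + 2 * int K + 1)"
   "\<bar>a - h\<bar> \<le> 8 * int K + 10" "\<bar>h - b\<bar> \<le> 8 * int K + 10" "\<bar>j0 - h\<bar> \<le> int K"
 shows "(a < j0 \<and> j0 < b \<or> b < j0 \<and> j0 < a) \<and> \<bar>j0 - a\<bar> > int K \<and> \<bar>j0 - b\<bar> > int K"
  using assms by (cases "a \<le> h"; cases "b \<le> h"; cases "j0 \<le> h"; simp add: abs_if split: if_splits; linarith)

lemma line_exact:
  fixes \<gamma> :: "int \<Rightarrow> lamp"
  assumes fin: "\<forall>m. finite (fst (\<gamma> m))" and fY: "finite Y"
    and iso: "\<forall>m m'. FF (\<gamma> m) (\<gamma> m') = nat \<bar>m - m'\<bar>"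
    and near: "\<forall>m. \<exists>q. FF (\<gamma> m) (Y,q) \<le> K"
  shows "fst (\<gamma> n) = Y"
proof (rule ccontr)
  assume ne: "fst (\<gamma> n) \<noteq> Y"
  have loc: "\<bar>x - snd (\<gamma> m)\<bar> \<le> int K" if "x \<in> badd (fst (\<gamma> m)) Y" for x m
  proof -
    obtain q where q: "FF (\<gamma> m) (Y,q) \<le> K" using near by blast
    show ?thesis using near_loc[of "fst (\<gamma> m)" Y "snd (\<gamma> m)" q K x] q fin fY that by simp
  qed
  define N :: int where "N = 8 * int K + 10"
  obtain Za a where A: "\<gamma> (n - N) = (Za, a)" by (cases "\<gamma> (n - N)")
  obtain Z h where P: "\<gamma> n = (Z, h)" by (cases "\<gamma> n")
  obtain Zb b where B: "\<gamma> (n + N) = (Zb, b)" by (cases "\<gamma> (n + N)")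
  have fA: "finite Za" using fin A by (metis fst_conv)
  have fP: "finite Z" using fin P by (metis fst_conv)
  have fB: "finite Zb" using fin B by (metis fst_conv)
  have lA: "\<And>x. x \<in> badd Za Y \<Longrightarrow> \<bar>x - a\<bar> \<le> int K" using loc[of _ "n - N"] A by simp
  have lP: "\<And>x. x \<in> badd Z Y \<Longrightarrow> \<bar>x - h\<bar> \<le> int K" using loc[of _ n] P by simp
  have lB: "\<And>x. x \<in> badd Zb Y \<Longrightarrow> \<bar>x - b\<bar> \<le> int K" using loc[of _ "n + N"] B by simp
  have Npos: "N > 0" by (simp add: N_def)
  have dAP: "FF (Za,a) (Z,h) = nat N"
  proof -
    have "FF (\<gamma> (n - N)) (\<gamma> n) = nat \<bar>(n - N) - n\<bar>" using iso by blast
    then show ?thesis using A P Npos by simp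
  qed
  have dPB: "FF (Z,h) (Zb,b) = nat N"
  proof -
    have "FF (\<gamma> n) (\<gamma> (n + N)) = nat \<bar>n - (n + N)\<bar>" using iso by blast
    then show ?thesis using B P Npos by simp
  qed
  have dAB: "FF (Za,a) (Zb,b) = nat (2*N)"
  proof -
    have "FF (\<gamma> (n - N)) (\<gamma> (n + N)) = nat \<bar>(n - N) - (n + N)\<bar>" using iso by blast
    then show ?thesis using A B Npos by simp
  qed
  have win: "\<And>Z1 k1 Z2 k2. (\<And>x. x \<in> badd Z1 Y \<Longrightarrow> \<bar>x - k1\<bar> \<le> int K) \<Longrightarrow>
      (\<And>x. x \<in> badd Z2 Y \<Longrightarrow> \<bar>x - k2\<bar> \<le> int K) \<Longrightarrow> finite Z1 \<Longrightarrow> finite Z2 \<Longrightarrow>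
      FF (Z1,k1) (Z2,k2) \<le> 2 * nat (\<bar>k1 - k2\<bar> + 2 * int K + 1)"
  proof -
    fix Z1 k1 Z2 k2
    assume l1: "\<And>x. x \<in> badd Z1 Y \<Longrightarrow> \<bar>x - k1\<bar> \<le> int K"
      and l2: "\<And>x. x \<in> badd Z2 Y \<Longrightarrow> \<bar>x - k2\<bar> \<le> int K" and f1: "finite Z1" and f2: "finite Z2"
    have "FF (Z1,k1) (Z2,k2) \<le> 2 * nat ((max k1 k2 + int K) - (min k1 k2 - int K) + 1)"
    proof (rule FF_le_window[OF f1 f2])
      show "\<forall>x\<in>dD (Z1, k1) (Z2, k2). min k1 k2 - int K \<le> x \<and> x \<le> max k1 k2 + int K"
      proof
        fix x assume "x \<in> dD (Z1, k1) (Z2, k2)"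
        then have "x \<in> badd Z1 Y \<or> x \<in> badd Z2 Y" by (auto simp: dD_badd badd_def)
        then have "\<bar>x - k1\<bar> \<le> int K \<or> \<bar>x - k2\<bar> \<le> int K" using l1 l2 by blast
        then show "min k1 k2 - int K \<le> x \<and> x \<le> max k1 k2 + int K"
          by (auto simp: abs_le_iff min_def max_def)
      qed
    qed auto
    also have "(max k1 k2 + int K) - (min k1 k2 - int K) + 1 = \<bar>k1 - k2\<bar> + 2 * int K + 1"
      by (simp add: max_def min_def)
    finally show "FF (Z1,k1) (Z2,k2) \<le> 2 * nat (\<bar>k1 - k2\<bar> + 2 * int K + 1)" .
  qed
  have w1: "nat N \<le> 2 * nat (\<bar>a - h\<bar> + 2 * int K + 1)" using win[OF lA lP fA fP] dAP by simp
  have w2: "nat N \<le> 2 * nat (\<bar>h - b\<bar> + 2 * int K + 1)" using win[OF lP lB fP fB] dPB by simp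
  have w3: "nat (2*N) \<le> 2 * nat (\<bar>a - b\<bar> + 2 * int K + 1)" using win[OF lA lB fA fB] dAB by simp
  have g1: "nat \<bar>a - h\<bar> \<le> nat N" using FF_ge_height[OF fA fP, of a h] dAP by simp
  have g2: "nat \<bar>h - b\<bar> \<le> nat N" using FF_ge_height[OF fP fB, of h b] dPB by simp
  obtain j0 where j0: "j0 \<in> badd Z Y" using ne P by (auto simp: badd_def)
  have jh: "\<bar>j0 - h\<bar> \<le> int K" using lP[OF j0] .
  have ar: "(a < j0 \<and> j0 < b \<or> b < j0 \<and> j0 < a) \<and> \<bar>j0 - a\<bar> > int K \<and> \<bar>j0 - b\<bar> > int K"
  proof (rule arith_sep)
    show "8 * int K + 10 \<le> 2 * (\<bar>a - h\<bar> + 2 * int K + 1)" using nl[OF w1 Npos] unfolding N_def .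
    show "8 * int K + 10 \<le> 2 * (\<bar>h - b\<bar> + 2 * int K + 1)" using nl[OF w2 Npos] unfolding N_def .
    have "2*N > 0" using Npos by simp
    show "2*(8 * int K + 10) \<le> 2 * (\<bar>a - b\<bar> + 2 * int K + 1)" using nl[OF w3 \<open>2*N > 0\<close>] unfolding N_def .
    show "\<bar>a - h\<bar> \<le> 8 * int K + 10" using nl2[OF g1 Npos] unfolding N_def .
    show "\<bar>h - b\<bar> \<le> 8 * int K + 10" using nl2[OF g2 Npos] unfolding N_def .
  qed (rule jh)
  have jA: "j0 \<notin> badd Za Y"
  proof
    assume "j0 \<in> badd Za Y"
    then have "\<bar>j0 - a\<bar> \<le> int K" by (rule lA)
    then show False using ar by linarith
  qed
  have jB: "j0 \<notin> badd Zb Y"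
  proof
    assume "j0 \<in> badd Zb Y"
    then have "\<bar>j0 - b\<bar> \<le> int K" by (rule lB)
    then show False using ar by linarith
  qed
  have c1: "covl (Za,a) (Z,h) j0" using j0 jA by (auto simp: covl_def dD_badd badd_def)
  have c2: "covl (Z,h) (Zb,b) j0" using j0 jB by (auto simp: covl_def dD_badd badd_def)
  have c3: "cc (Za,a) (Zb,b) j0 = 1" using ar by (auto simp: cc_def sepl_def)
  have "cc (Za,a) (Zb,b) j0 < cc (Za,a) (Z,h) j0 + cc (Z,h) (Zb,b) j0"
    using c3 cc_ge1[OF c1] cc_ge1[OF c2] by simp
  then have "FF (Za,a) (Zb,b) < FF (Za,a) (Z,h) + FF (Z,h) (Zb,b)"
    using FF_tri_gen[of "(Za,a)" "(Z,h)" "(Zb,b)"] fA fP fB by auto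
  then show False using dAP dPB dAB Npos by simp
qed



lemma ceil_bound: "real w < (C::real) \<Longrightarrow> w \<le> nat \<lceil>C\<rceil>"
  by (metis ceiling_mono ceiling_of_nat less_imp_le nat_int nat_mono)

lemma abs_aux1: "\<bar>x::int\<bar> = \<bar>n\<bar> \<Longrightarrow> \<bar>x - 1\<bar> = \<bar>n - 1\<bar> \<Longrightarrow> x = n"
  by (auto simp: abs_if split: if_splits)

lemma iso_affine:
  fixes f :: "int \<Rightarrow> int"
  assumes iso: "\<forall>n m. \<bar>f n - f m\<bar> = \<bar>n - m\<bar>"
  shows "\<exists>p e. (e = 1 \<or> e = -1) \<and> (\<forall>n. f n = p + e*n)"
proof -
  define e where "e = f 1 - f 0"
  have e1: "e = 1 \<or> e = -1" using iso[rule_format, of 1 0] by (auto simp: e_def abs_if split: if_splits)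
  have "\<forall>n. f n = f 0 + e*n"
  proof
    fix n
    have h1: "\<bar>f n - f 0\<bar> = \<bar>n\<bar>" using iso by simp
    have h2: "\<bar>f n - f 1\<bar> = \<bar>n - 1\<bar>" using iso by simp
    show "f n = f 0 + e*n"
    proof (cases "e = 1")
      case True
      then have "f 1 = f 0 + 1" by (simp add: e_def)
      then have "f n - f 0 = n" using abs_aux1[of "f n - f 0" n] h1 h2 by (simp add: algebra_simps)
      then show ?thesis using True by simp
    next
      case False
      then have "e = -1" using e1 by simp
      then have "f 1 = f 0 - 1" by (simp add: e_def)
      then have "f 0 - f n = n" using abs_aux1[of "f 0 - f n" n] h1 h2
        by (simp add: algebra_simps abs_minus_commute)
      then show ?thesis using \<open>e = -1\<close> by simp
    qed
  qed
  then show ?thesis using e1 by blast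
qed

lemma iso_agree:
  fixes f g :: "int \<Rightarrow> int"
  assumes "\<forall>n m. \<bar>f n - f m\<bar> = \<bar>n - m\<bar>" "\<forall>n m. \<bar>g n - g m\<bar> = \<bar>n - m\<bar>"
    "f j = g j" "f (j+1) = g (j+1)"
  shows "f = g"
proof -
  obtain p1 e1 where 1: "e1 = 1 \<or> e1 = -1" "\<forall>n. f n = p1 + e1*n" using iso_affine[OF assms(1)] by blast
  obtain p2 e2 where 2: "e2 = 1 \<or> e2 = -1" "\<forall>n. g n = p2 + e2*n" using iso_affine[OF assms(2)] by blast
  have a: "p1 + e1*j = p2 + e2*j" "p1 + e1*(j+1) = p2 + e2*(j+1)" using assms(3,4) 1 2 by auto
  then have "e1 = e2" by (simp add: algebra_simps)
  then have "p1 = p2" using a by simp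
  then show ?thesis using 1 2 \<open>e1 = e2\<close> by auto
qed

lemma arith4: "\<bar>(x1::int) - y2\<bar> = 1 \<Longrightarrow> \<bar>x2 - y1\<bar> = 1 \<Longrightarrow> min x1 y2 = min x2 y1 \<Longrightarrow> \<bar>x1 - x2\<bar> = 1
  \<Longrightarrow> x1 = y1 \<and> x2 = y2"
  by (auto simp: abs_if min_def split: if_splits)

lemma badd_solve: "badd A C = D \<Longrightarrow> C = badd A D"
  by (auto simp: badd_def)

lemma badd_ins: "x \<notin> F \<Longrightarrow> insert x F = badd F {x}"
  by (auto simp: badd_def)



lemma badd_ins2: "y \<notin> S \<Longrightarrow> badd (badd A S) {y} = badd A (insert y S)"
  by (auto simp: badd_def)

lemma badd_cancel: "badd (badd P S1) (badd P S2) = badd S1 S2"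
  by (auto simp: badd_def)

theorem proposition4p2:
  fixes \<Psi> :: "lamp \<Rightarrow> lamp" and \<psi> :: "int set \<Rightarrow> int set"
  assumes maps: "\<Psi> ` L2 \<subseteq> L2"
    and isom: "\<forall>g\<in>L2. \<forall>h\<in>L2. word_dist (\<Psi> g) (\<Psi> h) = word_dist g h"
    and onto: "\<forall>h\<in>L2. \<exists>g\<in>L2. word_dist (\<Psi> g) h = 0"
    and perm: "bij_betw \<psi> B B"
    and coarse: "\<exists>C'::real. C' \<ge> 0 \<and>
        (\<forall>X\<in>B. hausdist_L2 (\<Psi> ` tcoset X) (tcoset (\<psi> X)) < ereal C')"
  shows "\<forall>a\<in>B. \<forall>b\<in>B. \<forall>c\<in>B. \<forall>d\<in>B.
           badd a c = badd b d \<longrightarrow> badd (\<psi> a) (\<psi> c) = badd (\<psi> b) (\<psi> d)"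
proof -
  obtain C' :: real where C': "\<forall>X\<in>B. hausdist_L2 (\<Psi> ` tcoset X) (tcoset (\<psi> X)) < ereal C'"
    using coarse by blast
  define K where "K = nat \<lceil>C'\<rceil>"
  have inB: "\<And>X. X \<in> B \<longleftrightarrow> finite X" by (simp add: B_def)
  have inL2: "\<And>X n. (X,n) \<in> L2 \<longleftrightarrow> finite X" by (simp add: L2_def)
  have psiB: "\<And>X. finite X \<Longrightarrow> finite (\<psi> X)" using bij_betw_apply[OF perm] by (simp add: B_def)
  have psi_inj: "\<And>X Y. finite X \<Longrightarrow> finite Y \<Longrightarrow> \<psi> X = \<psi> Y \<Longrightarrow> X = Y"
    using perm unfolding bij_betw_def inj_on_def B_def by auto
  have PsiL2: "\<And>X n. finite X \<Longrightarrow> finite (fst (\<Psi> (X,n)))"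
  proof -
    fix X :: "int set" and n :: int assume "finite X"
    then have "(X,n) \<in> L2" by (simp add: L2_def)
    then have "\<Psi> (X,n) \<in> L2" using maps by blast
    then show "finite (fst (\<Psi> (X,n)))" by (cases "\<Psi> (X,n)") (simp add: inL2)
  qed
  have isoF: "\<And>X n Y m. finite X \<Longrightarrow> finite Y \<Longrightarrow> FF (\<Psi> (X,n)) (\<Psi> (Y,m)) = FF (X,n) (Y,m)"
  proof -
    fix X Y :: "int set" and n m :: int assume f: "finite X" "finite Y"
    have "word_dist (\<Psi> (X,n)) (\<Psi> (Y,m)) = word_dist (X,n) (Y,m)"
      by (rule isom[rule_format]) (simp_all add: L2_def f)
    then show "FF (\<Psi> (X,n)) (\<Psi> (Y,m)) = FF (X,n) (Y,m)"
      using word_dist_FF[of "\<Psi> (X,n)" "\<Psi> (Y,m)"] PsiL2[OF f(1), of n] PsiL2[OF f(2), of m]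
        word_dist_FF[of "(X,n)" "(Y,m)"] f by simp
  qed
  have near: "\<And>X m. finite X \<Longrightarrow> \<exists>q. FF (\<Psi> (X,m)) (\<psi> X, q) \<le> K"
  proof -
    fix X :: "int set" and m :: int assume fX: "finite X"
    let ?S = "\<Psi> ` tcoset X" and ?T = "tcoset (\<psi> X)"
    have h: "hausdist_L2 ?S ?T < ereal C'" using C' fX by (simp add: B_def)
    have "(SUP a\<in>?S. setdist_pt a ?T) < ereal C'" using h unfolding hausdist_L2_def by simp
    moreover have "\<Psi> (X,m) \<in> ?S" by (auto simp: tcoset_def)
    ultimately have "setdist_pt (\<Psi> (X,m)) ?T < ereal C'"
      by (meson SUP_upper order.strict_trans1)
    then obtain b where b: "b \<in> ?T" "ereal (real (word_dist (\<Psi> (X,m)) b)) < ereal C'"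
      unfolding setdist_pt_def by (auto simp: INF_less_iff)
    obtain q where bq: "b = (\<psi> X, q)" using b(1) by (auto simp: tcoset_def)
    have "word_dist (\<Psi> (X,m)) b = FF (\<Psi> (X,m)) b"
      using word_dist_FF[of "\<Psi> (X,m)" b] PsiL2[OF fX, of m] psiB[OF fX] bq by simp
    then have "FF (\<Psi> (X,m)) (\<psi> X, q) \<le> K" using b(2) bq ceil_bound unfolding K_def by auto
    then show "\<exists>q. FF (\<Psi> (X,m)) (\<psi> X, q) \<le> K" by blast
  qed
  have line: "\<And>X n. finite X \<Longrightarrow> fst (\<Psi> (X,n)) = \<psi> X"
  proof -
    fix X :: "int set" and n :: int assume fX: "finite X"
    show "fst (\<Psi> (X,n)) = \<psi> X"
    proof (rule line_exact[where \<gamma> = "\<lambda>m. \<Psi> (X,m)" and K = K])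
      show "\<forall>m. finite (fst (\<Psi> (X, m)))" using PsiL2 fX by blast
      show "finite (\<psi> X)" using psiB fX by blast
      show "\<forall>m m'. FF (\<Psi> (X, m)) (\<Psi> (X, m')) = nat \<bar>m - m'\<bar>" using isoF fX FF_same by simp
      show "\<forall>m. \<exists>q. FF (\<Psi> (X, m)) (\<psi> X, q) \<le> K" using near fX by blast
    qed
  qed
  define aa where "aa X n = snd (\<Psi> (X,n))" for X n
  have Psi_eq: "\<And>X n. finite X \<Longrightarrow> \<Psi> (X,n) = (\<psi> X, aa X n)"
  proof -
    fix X :: "int set" and n :: int assume fX: "finite X"
    have "\<Psi> (X,n) = (fst (\<Psi> (X,n)), snd (\<Psi> (X,n)))" by simp
    then show "\<Psi> (X,n) = (\<psi> X, aa X n)" using line[OF fX, of n] by (simp add: aa_def)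
  qed
  have aa_iso: "\<And>X. finite X \<Longrightarrow> \<forall>n m. \<bar>aa X n - aa X m\<bar> = \<bar>n - m\<bar>"
  proof (intro allI)
    fix X :: "int set" and n m :: int assume fX: "finite X"
    have "FF (\<Psi> (X,n)) (\<Psi> (X,m)) = nat \<bar>n - m\<bar>" using isoF fX FF_same by simp
    then have "nat \<bar>aa X n - aa X m\<bar> = nat \<bar>n - m\<bar>" using Psi_eq[OF fX] FF_same by simp
    then show "\<bar>aa X n - aa X m\<bar> = \<bar>n - m\<bar>" by simp
  qed
  have step: "\<And>X j. finite X \<Longrightarrow> aa (badd X {j}) = aa X \<and>
       \<psi> (badd X {j}) = badd (\<psi> X) {min (aa X j) (aa X (j+1))}"
  proof -
    fix X :: "int set" and j :: int assume fX: "finite X"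
    define Y where "Y = badd X {j}"
    have fY: "finite Y" using fX by (simp add: Y_def finite_badd)
    have YX: "badd Y {j} = X" by (auto simp: Y_def badd_def)
    have neXY: "X \<noteq> Y" by (auto simp: Y_def badd_def)
    have ne: "\<psi> X \<noteq> \<psi> Y" using psi_inj fX fY neXY by blast
    have a1: "cayley_adj (X,j) (Y,j+1)" using fX by (simp add: adj_iff Y_def)
    have "cayley_adj (Y,j) (badd Y {j},j+1)" using fY by (simp add: adj_iff)
    then have a2: "cayley_adj (Y,j) (X,j+1)" by (simp only: YX)
    have d1: "FF (X,j) (Y,j+1) = 1" using adj_FF[OF a1] by simp
    have d2: "FF (X,j+1) (Y,j) = 1" using adj_FF[OF a2] FF_sym by simp
    have e1: "FF (\<psi> X, aa X j) (\<psi> Y, aa Y (j+1)) = 1"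
      using isoF[OF fX fY, of j "j+1"] d1 Psi_eq fX fY by simp
    have e2: "FF (\<psi> X, aa X (j+1)) (\<psi> Y, aa Y j) = 1"
      using isoF[OF fX fY, of "j+1" j] d2 Psi_eq fX fY by simp
    have r1: "\<bar>aa X j - aa Y (j+1)\<bar> = 1 \<and> badd (\<psi> X) (\<psi> Y) = {min (aa X j) (aa Y (j+1))}"
      by (rule FF_eq1[OF psiB[OF fX] psiB[OF fY] e1 ne])
    have r2: "\<bar>aa X (j+1) - aa Y j\<bar> = 1 \<and> badd (\<psi> X) (\<psi> Y) = {min (aa X (j+1)) (aa Y j)}"
      by (rule FF_eq1[OF psiB[OF fX] psiB[OF fY] e2 ne])
    have i1: "\<bar>aa X j - aa X (j+1)\<bar> = 1" using aa_iso[OF fX] by simp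
    have ag: "aa X j = aa Y j \<and> aa X (j+1) = aa Y (j+1)"
      using arith4[of "aa X j" "aa Y (j+1)" "aa X (j+1)" "aa Y j"] r1 r2 i1 by auto
    have eqa: "aa X = aa Y"
      using iso_agree[OF aa_iso[OF fX] aa_iso[OF fY]] ag by blast
    have "badd (\<psi> X) (\<psi> Y) = {min (aa X j) (aa X (j+1))}" using r1 ag by simp
    then have "\<psi> Y = badd (\<psi> X) {min (aa X j) (aa X (j+1))}" by (rule badd_solve)
    then show "aa (badd X {j}) = aa X \<and> \<psi> (badd X {j}) = badd (\<psi> X) {min (aa X j) (aa X (j+1))}"
      using eqa Y_def by simp
  qed
  define a0 where "a0 = aa {}"
  have aa_const: "\<And>X. finite X \<Longrightarrow> aa X = a0"
  proof -
    fix X :: "int set" assume "finite X"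
    then show "aa X = a0"
    proof (induction X rule: finite_induct)
      case empty then show ?case by (simp add: a0_def)
    next
      case (insert x F)
      then show ?case using step[OF insert(1), of x] badd_ins[OF insert(2)] by simp
    qed
  qed
  define g where "g j = min (a0 j) (a0 (j+1))" for j
  have ginj: "inj g"
  proof -
    obtain p e where pe: "e = 1 \<or> e = -1" "\<forall>n. a0 n = p + e*n"
      using iso_affine[OF aa_iso[of "{}"]] a0_def by auto
    have "(\<forall>j. g j = p + j) \<or> (\<forall>j. g j = p - j - 1)"
    proof (cases "e = 1")
      case True then show ?thesis using pe by (simp add: g_def)
    next
      case False then have "e = -1" using pe by simp
      then show ?thesis using pe by (simp add: g_def)
    qed
    then show ?thesis by (auto intro!: injI)
  qed
  have psi_form: "\<And>X. finite X \<Longrightarrow> \<psi> X = badd (\<psi> {}) (g ` X)"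
  proof -
    fix X :: "int set" assume "finite X"
    then show "\<psi> X = badd (\<psi> {}) (g ` X)"
    proof (induction X rule: finite_induct)
      case empty then show ?case by (simp add: badd_def)
    next
      case (insert x F)
      have gx: "g x \<notin> g ` F" using ginj insert(2) by (auto dest: injD)
      have "\<psi> (insert x F) = badd (\<psi> F) {g x}"
        using step[OF insert(1), of x] badd_ins[OF insert(2)] aa_const[OF insert(1)] g_def by simp
      then show ?case using insert(3) badd_ins2[OF gx] by simp
    qed
  qed
  have lin: "\<And>a c. finite a \<Longrightarrow> finite c \<Longrightarrow> badd (\<psi> a) (\<psi> c) = g ` (badd a c)"
  proof -
    fix a c :: "int set" assume fa: "finite a" and fc: "finite c"
    have "badd (\<psi> a) (\<psi> c) = badd (badd (\<psi> {}) (g ` a)) (badd (\<psi> {}) (g ` c))"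
      using psi_form[OF fa] psi_form[OF fc] by metis
    also have "\<dots> = badd (g ` a) (g ` c)" by (rule badd_cancel)
    finally have "badd (\<psi> a) (\<psi> c) = badd (g ` a) (g ` c)" .
    also have "\<dots> = g ` (badd a c)" using ginj by (simp add: badd_def image_Un image_set_diff)
    finally show "badd (\<psi> a) (\<psi> c) = g ` (badd a c)" .
  qed
  show ?thesis
  proof (intro ballI impI)
    fix a b c d assume "a \<in> B" "b \<in> B" "c \<in> B" "d \<in> B" and e: "badd a c = badd b d"
    then have "finite a" "finite b" "finite c" "finite d" by (simp_all add: B_def)
    then show "badd (\<psi> a) (\<psi> c) = badd (\<psi> b) (\<psi> d)" using lin e by simp
  qed
qed


end
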